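(* If $d_1-p_1\ge d_2-p_2\ge\cdots\ge d_n-p_n$, then first-fit (equivalently next-fit) satisfies $FF(I)<2\,OPT(I)$ for every such instance $I$ with $OPT(I)\ge 2$ (and $FF(I)=1$ when $OPT(I)=1$); in particular first-fit is a 2-approximation on this class. The bound is tight: for every integer $k\ge1$ there is an instance of this class with $OPT(I)=k+1$ and $FF(I)=2k+1$, namely the instance with $3k+1$ jobs $a_1,\dots,a_k$ with $(p,d)=(k,2k)$, $b_1,\dots,b_k$ with $(p,d)=(1,k+1)$, and $c_1,\dots,c_{k+1}$ with $(p,d)=(k+1,2k+1)$, in the fixed order $a_1,b_1,a_2,b_2,\dots,a_k,b_k,c_1,c_2,\dots,c_{k+1}$ (all jobs have slack $k$), so that $\sup_I FF(I)/OPT(I)=2$ on this class.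
   Context: Fixed order scheduling with deadlines: there are jobs $J=\{1,\dots,n\}$, each job $j$ having a processing time $p_j\in\mathbb{N}$, $p_j>0$, and a deadline $d_j\in\mathbb{N}$ with $d_j\ge p_j$; the slack of job $j$ is $d_j-p_j$. All jobs are released at time $0$; job $j$ precedes job $k$ in the fixed order iff $j<k$. A schedule $\tau:J\to\{1,\dots,n\}$ assigns jobs to identical machines; each machine processes its jobs in the fixed order from time $0$ without idle time or preemption, so job $j$ completes at $\sum_{k\le j,\tau(k)=\tau(j)}p_k$; it is feasible if every job completes by its deadline. $OPT(I)$ is the minimum number of machines used by a feasible schedule. First-fit (FF): machines indexed $1,2,\dots$; process jobs in the fixed order and assign each job $j$ to the smallest-index machine whose current load (sum of processing times already assigned) plus $p_j$ is at most $d_j$; $FF(I)$ is the number of nonempty machines. Next-fit (NF): assign job $j$ to the most recently opened machine if it fits there, otherwise to a new machine. *)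

theory Defs
  imports Complex_Main
begin

text \<open>An instance is a list of jobs (p_j, d_j), in the fixed order; job j is I ! j
  (0-indexed). Processing time fst, deadline snd.\<close>

type_synonym inst = "(nat \<times> nat) list"

definition valid_instance :: "inst \<Rightarrow> bool" where
  "valid_instance I \<longleftrightarrow> (\<forall>j < length I. 0 < fst (I ! j) \<and> fst (I ! j) \<le> snd (I ! j))"

definition slack :: "inst \<Rightarrow> nat \<Rightarrow> nat" where
  "slack I j = snd (I ! j) - fst (I ! j)"

definition slack_nonincreasing :: "inst \<Rightarrow> bool" where
  "slack_nonincreasing I \<longleftrightarrow> (\<forall>i j. i \<le> j \<and> j < length I \<longrightarrow> slack I j \<le> slack I i)"

text \<open>Schedule tau: jobs {0..<n} to machines {1..n}; completion time of job j.\<close>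

definition completion :: "inst \<Rightarrow> (nat \<Rightarrow> nat) \<Rightarrow> nat \<Rightarrow> nat" where
  "completion I \<tau> j = (\<Sum>k\<in>{k. k \<le> j \<and> \<tau> k = \<tau> j}. fst (I ! k))"

definition feasible :: "inst \<Rightarrow> (nat \<Rightarrow> nat) \<Rightarrow> bool" where
  "feasible I \<tau> \<longleftrightarrow> (\<forall>j < length I. \<tau> j \<in> {1..length I} \<and> completion I \<tau> j \<le> snd (I ! j))"

definition OPT :: "inst \<Rightarrow> nat" where
  "OPT I = (LEAST m. \<exists>\<tau>. feasible I \<tau> \<and> card (\<tau> ` {..<length I}) = m)"

text \<open>First-fit: list of machine loads (index 0 = machine 1).\<close>

definition ff_step :: "nat list \<Rightarrow> nat \<times> nat \<Rightarrow> nat list" where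
  "ff_step ls pd = (let p = fst pd; d = snd pd in
     if (\<exists>i < length ls. ls ! i + p \<le> d)
     then (let i = (LEAST i. i < length ls \<and> ls ! i + p \<le> d) in ls[i := ls ! i + p])
     else ls @ [p])"

definition FF :: "inst \<Rightarrow> nat" where
  "FF I = length (foldl ff_step [] I)"

definition nf_step :: "nat list \<Rightarrow> nat \<times> nat \<Rightarrow> nat list" where
  "nf_step ls pd = (let p = fst pd; d = snd pd in
     if ls \<noteq> [] \<and> last ls + p \<le> d then butlast ls @ [last ls + p] else ls @ [p])"

definition NF :: "inst \<Rightarrow> nat" where
  "NF I = length (foldl nf_step [] I)"

definition tight_instance :: "nat \<Rightarrow> inst" where
  "tight_instance k =
     concat (map (\<lambda>_. [(k, 2*k), (1, k+1)]) [0..<k]) @ replicate (k+1) (k+1, 2*k+1)"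

end

theory Submission
  imports Defs
begin


lemma abstract_count:
  fixes N :: "nat set" and A :: "'m set" and i :: "'m \<Rightarrow> nat" and a :: "nat \<Rightarrow> nat"
  assumes "finite N" "N \<noteq> {}" "finite A" "\<forall>M\<in>A. i M \<in> N"
    "\<forall>x\<in>N. \<forall>y\<in>N. x \<le> y \<longrightarrow> a y \<le> a x"
    "\<forall>x\<in>N. (\<Sum>y\<in>{y\<in>N. x \<le> y}. a y) < (\<Sum>M\<in>{M\<in>A. x \<le> i M}. a (i M))"
  shows "card N < card A"
  using assms
proof (induction "card N" arbitrary: N A i rule: less_induct)
  case less
  define x0 where "x0 = Max N"
  have x0N: "x0 \<in> N" using less.prems x0_def by auto
  have x0max: "\<forall>y\<in>N. y \<le> x0" using less.prems x0_def by auto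
  define B where "B = {M\<in>A. x0 \<le> i M}"
  have B_eq: "B = {M\<in>A. i M = x0}" using x0max less.prems(4) B_def by force
  have "{y\<in>N. x0 \<le> y} = {x0}" using x0N x0max by force
  then have c0: "a x0 < (\<Sum>M\<in>B. a (i M))" using less.prems(6) x0N B_def by force
  also have "(\<Sum>M\<in>B. a (i M)) = card B * a x0" using B_eq by simp
  finally have c0': "a x0 < card B * a x0" .
  have "card B \<noteq> 0" using c0' by (metis mult_0 not_less0)
  moreover have "card B \<noteq> 1" using c0' by auto
  ultimately have cB: "card B \<ge> 2" by linarith
  have finB: "finite B" using less.prems(3) B_def by simp
  then obtain M0 where M0: "M0 \<in> B" using cB by (metis card.empty ex_in_conv not_numeral_le_zero)
  have BA: "B \<subseteq> A" using B_def by auto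
  show ?case
  proof (cases "N - {x0} = {}")
    case True
    then have "N = {x0}" using x0N by auto
    then have "card N = 1" by simp
    moreover have "card B \<le> card A" using card_mono[OF less.prems(3) BA] .
    ultimately show ?thesis using cB by simp
  next
    case False
    define N' where "N' = N - {x0}"
    define x1 where "x1 = Max N'"
    have finN': "finite N'" using less.prems N'_def by simp
    have "N' \<noteq> {}" using False N'_def by simp
    then have x1N': "x1 \<in> N'" using finN' x1_def Max_in by blast
    have x1max: "\<forall>y\<in>N'. y \<le> x1" using finN' x1_def by auto
    have x1x0: "x1 < x0" using x1N' x0max N'_def by force
    define i' where "i' = (\<lambda>M. if i M = x0 then x1 else i M)"
    define A' where "A' = A - {M0}"
    have M0A: "M0 \<in> A" and iM0: "i M0 = x0" using M0 B_eq by auto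
    have cardN': "card N' < card N" using N'_def x0N less.prems(1) by (metis card_Diff1_less)
    have h4: "\<forall>M\<in>A'. i' M \<in> N'" using less.prems(4) x1N' unfolding A'_def i'_def N'_def by auto
    have h5: "\<forall>x\<in>N'. \<forall>y\<in>N'. x \<le> y \<longrightarrow> a y \<le> a x" using less.prems(5) N'_def by auto
    have h6: "\<forall>x\<in>N'. (\<Sum>y\<in>{y\<in>N'. x \<le> y}. a y) < (\<Sum>M\<in>{M\<in>A'. x \<le> i' M}. a (i' M))"
    proof
      fix x assume xN': "x \<in> N'"
      have xx1: "x \<le> x1" using xN' x1max by auto
      have xN: "x \<in> N" using xN' N'_def by auto
      have e1: "{y\<in>N. x \<le> y} = insert x0 {y\<in>N'. x \<le> y}" using x0N xx1 x1x0 N'_def by auto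
      have s1: "(\<Sum>y\<in>{y\<in>N. x \<le> y}. a y) = a x0 + (\<Sum>y\<in>{y\<in>N'. x \<le> y}. a y)"
        unfolding e1 using finN' N'_def by (simp add: sum.insert)
      have e2: "{M\<in>A. x \<le> i M} = insert M0 {M\<in>A'. x \<le> i M}"
        using M0A iM0 xx1 x1x0 A'_def by auto
      have finA': "finite A'" using less.prems(3) A'_def by simp
      have s2: "(\<Sum>M\<in>{M\<in>A. x \<le> i M}. a (i M)) = a x0 + (\<Sum>M\<in>{M\<in>A'. x \<le> i M}. a (i M))"
        unfolding e2 using finA' A'_def iM0 by (simp add: sum.insert)
      have e3: "{M\<in>A'. x \<le> i M} = {M\<in>A'. x \<le> i' M}"
        using xx1 x1x0 unfolding i'_def by auto
      have s3: "(\<Sum>M\<in>{M\<in>A'. x \<le> i M}. a (i M)) \<le> (\<Sum>M\<in>{M\<in>A'. x \<le> i' M}. a (i' M))"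
        unfolding e3[symmetric]
      proof (rule sum_mono)
        fix M assume "M \<in> {M\<in>A'. x \<le> i M}"
        then have "i M \<in> N" using less.prems(4) A'_def by auto
        then show "a (i M) \<le> a (i' M)"
          unfolding i'_def using less.prems(5) x1N' N'_def x1x0 by auto
      qed
      show "(\<Sum>y\<in>{y\<in>N'. x \<le> y}. a y) < (\<Sum>M\<in>{M\<in>A'. x \<le> i' M}. a (i' M))"
        using less.prems(6) xN s1 s2 s3 by fastforce
    qed
    have "card N' < card A'"
      using less.hyps[OF cardN' _ _ _ h4 h5 h6] finN' False N'_def less.prems(3) A'_def by auto
    moreover have "card A' = card A - 1" using A'_def M0A less.prems(3) by simp
    moreover have "card N' = card N - 1" using N'_def x0N less.prems(1) by simp
    moreover have "card A \<ge> 1" using M0A less.prems(3) by (metis One_nat_def Suc_leI card_gt_0_iff empty_iff)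
    ultimately show ?thesis using cardN' by linarith
  qed
qed



definition nfl :: "inst \<Rightarrow> nat \<Rightarrow> nat list" where
  "nfl I r = foldl nf_step [] (take r I)"

definition nu :: "inst \<Rightarrow> nat \<Rightarrow> nat" where
  "nu I t = length (nfl I (Suc t)) - 1"

lemma nfl_0[simp]: "nfl I 0 = []" by (simp add: nfl_def)

lemma nfl_Suc: "r < length I \<Longrightarrow> nfl I (Suc r) = nf_step (nfl I r) (I ! r)"
  by (simp add: nfl_def take_Suc_conv_app_nth)

lemma nfl_len: "nfl I (length I) = foldl nf_step [] I" by (simp add: nfl_def)

lemma nf_step_fit: "ls \<noteq> [] \<Longrightarrow> last ls + fst pd \<le> snd pd \<Longrightarrow>
   nf_step ls pd = butlast ls @ [last ls + fst pd]"
  by (simp add: nf_step_def Let_def)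

lemma nf_step_nofit: "\<not> (ls \<noteq> [] \<and> last ls + fst pd \<le> snd pd) \<Longrightarrow>
   nf_step ls pd = ls @ [fst pd]"
  by (auto simp add: nf_step_def Let_def)

lemma nf_step_len: "length (nf_step ls pd) =
   (if ls \<noteq> [] \<and> last ls + fst pd \<le> snd pd then length ls else Suc (length ls))"
  by (auto simp add: nf_step_def Let_def)

lemma nfl_len_Suc: "r < length I \<Longrightarrow> length (nfl I (Suc r)) = length (nfl I r) \<or>
   length (nfl I (Suc r)) = Suc (length (nfl I r))"
  by (simp add: nfl_Suc nf_step_len)

lemma nfl_ne: "r < length I \<Longrightarrow> nfl I (Suc r) \<noteq> []"
  by (simp add: nfl_Suc nf_step_def Let_def)

lemma nfl_len_mono: "r \<le> r' \<Longrightarrow> r' \<le> length I \<Longrightarrow> length (nfl I r) \<le> length (nfl I r')"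
proof (induction r' rule: dec_induct)
  case base then show ?case by simp
next
  case (step r') then show ?case using nfl_len_Suc[of r' I] by auto
qed

lemma nfl_len_Suc_le: "r < length I \<Longrightarrow> length (nfl I (Suc r)) \<le> Suc (length (nfl I r))"
  using nfl_len_Suc[of r I] by auto

lemma nu_len: "t < length I \<Longrightarrow> length (nfl I (Suc t)) = Suc (nu I t)"
  using nfl_ne[of t I] by (simp add: nu_def)

lemma nu_0: "length I > 0 \<Longrightarrow> nu I 0 = 0"
  by (simp add: nu_def nfl_Suc nf_step_def Let_def)

lemma nu_mono: "t \<le> t' \<Longrightarrow> t' < length I \<Longrightarrow> nu I t \<le> nu I t'"
  unfolding nu_def using nfl_len_mono[of "Suc t" "Suc t'" I] by simp

lemma nu_step: "Suc t < length I \<Longrightarrow> nu I (Suc t) \<le> Suc (nu I t)"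
  using nfl_len_Suc_le[of "Suc t" I] nu_len[of t I] nu_len[of "Suc t" I] by simp

lemma nu_lt_len: "t < length I \<Longrightarrow> r \<le> length I \<Longrightarrow> t < r \<Longrightarrow> nu I t < length (nfl I r)"
  using nu_len[of t I] nfl_len_mono[of "Suc t" r I] by simp

lemma nu_ivt: "t0 < length I \<Longrightarrow> v \<le> nu I t0 \<Longrightarrow> \<exists>t\<le>t0. nu I t = v"
proof (induction t0)
  case 0 then show ?case using nu_0[of I] by auto
next
  case (Suc t0)
  show ?case
  proof (cases "v \<le> nu I t0")
    case True then show ?thesis using Suc by (metis Suc_lessD le_SucI)
  next
    case False then have "v = nu I (Suc t0)" using Suc.prems nu_step[of t0 I] by simp
    then show ?thesis by auto
  qed
qed

lemma nfl_loads: "r \<le> length I \<Longrightarrow> y < length (nfl I r) \<Longrightarrow>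
   nfl I r ! y = (\<Sum>t\<in>{t. t < r \<and> nu I t = y}. fst (I ! t))"
proof (induction r arbitrary: y)
  case 0 then show ?case by simp
next
  case (Suc r)
  define ls where "ls = nfl I r"
  have rI: "r < length I" using Suc.prems by simp
  have IH: "\<And>y. y < length ls \<Longrightarrow> ls ! y = (\<Sum>t\<in>{t. t < r \<and> nu I t = y}. fst (I ! t))"
    using Suc.IH rI ls_def by simp
  have nur: "nu I r = length (nfl I (Suc r)) - 1" by (simp add: nu_def)
  have nut: "\<And>t. t < r \<Longrightarrow> nu I t < length ls"
    using nu_lt_len[of _ I r] rI ls_def by simp
  show ?case
  proof (cases "ls \<noteq> [] \<and> last ls + fst (I!r) \<le> snd (I!r)")
    case True
    have eq: "nfl I (Suc r) = butlast ls @ [last ls + fst (I!r)]"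
      using nfl_Suc[OF rI] nf_step_fit True ls_def by simp
    have nur': "nu I r = length ls - 1" using nur eq by simp
    show ?thesis
    proof (cases "y < length ls - 1")
      case True
      have "nfl I (Suc r) ! y = ls ! y" using eq True by (simp add: nth_append nth_butlast)
      moreover have "{t. t < Suc r \<and> nu I t = y} = {t. t < r \<and> nu I t = y}"
        using nur' True less_Suc_eq by auto
      ultimately show ?thesis using IH True by simp
    next
      case False
      then have y: "y = length ls - 1" using Suc.prems eq by simp
      have "nfl I (Suc r) ! y = last ls + fst (I!r)" using eq y by (simp add: nth_append)
      also have "last ls = ls ! y" using y True by (simp add: last_conv_nth)
      also have "{t. t < Suc r \<and> nu I t = y} = insert r {t. t < r \<and> nu I t = y}"
        using nur' y less_Suc_eq by auto
      ultimately show ?thesis using IH[of y] y True by simp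
    qed
  next
    case False
    have eq: "nfl I (Suc r) = ls @ [fst (I!r)]"
      using nfl_Suc[OF rI] nf_step_nofit False ls_def by simp
    have nur': "nu I r = length ls" using nur eq by simp
    show ?thesis
    proof (cases "y < length ls")
      case True
      have "nfl I (Suc r) ! y = ls ! y" using eq True by (simp add: nth_append)
      moreover have "{t. t < Suc r \<and> nu I t = y} = {t. t < r \<and> nu I t = y}"
        using nur' True less_Suc_eq by auto
      ultimately show ?thesis using IH True by simp
    next
      case False
      then have y: "y = length ls" using Suc.prems eq by simp
      have "nfl I (Suc r) ! y = fst (I!r)" using eq y by (simp add: nth_append)
      moreover have "{t. t < Suc r \<and> nu I t = y} = {r}"
        using nur' y nut less_Suc_eq by fastforce
      ultimately show ?thesis by simp
    qed
  qed
qed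



lemma nu_closed:
  assumes "Suc t < length I" "nu I (Suc t) = Suc (nu I t)"
  shows "snd (I ! Suc t) < nfl I (length I) ! nu I t + fst (I ! Suc t)"
proof -
  define ls where "ls = nfl I (Suc t)"
  have len: "length ls = Suc (nu I t)" using nu_len[of t I] assms ls_def by simp
  have len2: "length (nfl I (Suc (Suc t))) = Suc (Suc (nu I t))" using nu_len[of "Suc t" I] assms by simp
  have "nfl I (Suc (Suc t)) = nf_step ls (I ! Suc t)" using nfl_Suc[OF assms(1)] ls_def by simp
  then have nf: "\<not> (ls \<noteq> [] \<and> last ls + fst (I ! Suc t) \<le> snd (I ! Suc t))"
    using len len2 nf_step_len[of ls "I ! Suc t"] by auto
  have ne: "ls \<noteq> []" using len by auto
  have "last ls = ls ! nu I t" using ne len by (simp add: last_conv_nth)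
  also have "\<dots> = (\<Sum>t'\<in>{t'. t' < Suc t \<and> nu I t' = nu I t}. fst (I ! t'))"
    using nfl_loads[of "Suc t" I "nu I t"] len assms ls_def by simp
  also have "{t'. t' < Suc t \<and> nu I t' = nu I t} = {t'. t' < length I \<and> nu I t' = nu I t}"
  proof -
    have "\<And>t'. Suc t \<le> t' \<Longrightarrow> t' < length I \<Longrightarrow> nu I t' \<noteq> nu I t"
      using nu_mono[of "Suc t" _ I] assms by fastforce
    then show ?thesis using assms by (auto simp: not_less) (meson not_less)
  qed
  also have "(\<Sum>t'\<in>{t'. t' < length I \<and> nu I t' = nu I t}. fst (I ! t')) = nfl I (length I) ! nu I t"
    using nfl_loads[of "length I" I "nu I t"] nu_lt_len[of t I "length I"] assms by simp
  finally show ?thesis using nf ne by simp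
qed

lemma update_last: "ls \<noteq> [] \<Longrightarrow> ls[length ls - 1 := x] = butlast ls @ [x]"
  by (metis append_butlast_last_id length_butlast list_update_length)

lemma ff_eq_nf:
  assumes V: "valid_instance I" and S: "slack_nonincreasing I"
  shows "r \<le> length I \<Longrightarrow> foldl ff_step [] (take r I) = nfl I r \<and>
     (0 < r \<longrightarrow> (\<forall>i. Suc i < length (nfl I r) \<longrightarrow> slack I (r - 1) < nfl I r ! i))"
proof (induction r)
  case 0 then show ?case by (simp add: nfl_def)
next
  case (Suc r)
  have rI: "r < length I" using Suc.prems by simp
  define ls where "ls = nfl I r"
  define p where "p = fst (I ! r)"
  define d where "d = snd (I ! r)"
  have pd: "p \<le> d" "0 < p" using V rI unfolding valid_instance_def p_def d_def by auto
  have sl: "slack I r = d - p" unfolding slack_def p_def d_def by simp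
  have IH1: "foldl ff_step [] (take r I) = ls" using Suc ls_def by simp
  have ffs: "foldl ff_step [] (take (Suc r) I) = ff_step ls (p, d)"
    using IH1 rI by (simp add: take_Suc_conv_app_nth p_def d_def)
  have nfs: "nfl I (Suc r) = nf_step ls (p, d)" using nfl_Suc[OF rI] ls_def p_def d_def by simp
  have nonlast: "\<And>i. Suc i < length ls \<Longrightarrow> d < ls ! i + p \<and> slack I r < ls ! i"
  proof -
    fix i assume i: "Suc i < length ls"
    then have r0: "0 < r" using ls_def by (cases r) auto
    have "slack I (r - 1) < ls ! i" using Suc i r0 ls_def by simp
    moreover have "slack I r \<le> slack I (r - 1)" using S rI unfolding slack_nonincreasing_def by simp
    ultimately show "d < ls ! i + p \<and> slack I r < ls ! i" using sl pd by linarith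
  qed
  show ?case
  proof (cases "ls \<noteq> [] \<and> last ls + p \<le> d")
    case True
    have lastn: "last ls = ls ! (length ls - 1)" using True by (simp add: last_conv_nth)
    have ex: "\<exists>i < length ls. ls ! i + p \<le> d" using True lastn by (metis diff_less length_greater_0_conv zero_less_one)
    have least: "(LEAST i. i < length ls \<and> ls ! i + p \<le> d) = length ls - 1"
    proof (rule Least_equality)
      show "length ls - 1 < length ls \<and> ls ! (length ls - 1) + p \<le> d" using True lastn by simp
    next
      fix y assume "y < length ls \<and> ls ! y + p \<le> d"
      then show "length ls - 1 \<le> y" using nonlast by (metis Suc_lessI diff_Suc_1 leI less_imp_diff_less not_less_eq order.strict_trans1)
    qed
    have e1: "ff_step ls (p, d) = butlast ls @ [last ls + p]"
      using ex least True lastn update_last[of ls] by (simp add: ff_step_def Let_def)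
    have e2: "nf_step ls (p, d) = butlast ls @ [last ls + p]" using nf_step_fit True by simp
    have inv: "\<forall>i. Suc i < length (nfl I (Suc r)) \<longrightarrow> slack I r < nfl I (Suc r) ! i"
      using nonlast nfs e2 by (auto simp: nth_append nth_butlast)
    show ?thesis using ffs nfs e1 e2 inv by simp
  next
    case False
    have noex: "\<not> (\<exists>i < length ls. ls ! i + p \<le> d)"
    proof
      assume "\<exists>i < length ls. ls ! i + p \<le> d"
      then obtain i where i: "i < length ls" "ls ! i + p \<le> d" by auto
      show False
      proof (cases "Suc i < length ls")
        case True then show False using nonlast i by force
      next
        case False
        then have "i = length ls - 1" using i by simp
        then have "last ls = ls ! i" using i by (metis last_conv_nth list.size(3) not_less0)
        then show False using \<open>\<not> (ls \<noteq> [] \<and> last ls + p \<le> d)\<close> i by auto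
      qed
    qed
    have e1: "ff_step ls (p, d) = ls @ [p]" using noex unfolding ff_step_def Let_def by auto
    have e2: "nf_step ls (p, d) = ls @ [p]" using nf_step_nofit False by simp
    have inv: "\<forall>i. Suc i < length (nfl I (Suc r)) \<longrightarrow> slack I r < nfl I (Suc r) ! i"
    proof (intro allI impI)
      fix i assume i: "Suc i < length (nfl I (Suc r))"
      then have il: "i < length ls" using nfs e2 by simp
      show "slack I r < nfl I (Suc r) ! i"
      proof (cases "Suc i < length ls")
        case True then show ?thesis using nonlast nfs e2 by (simp add: nth_append)
      next
        case False
        then have "i = length ls - 1" using il by simp
        then have "last ls = ls ! i" using il by (metis last_conv_nth list.size(3) not_less0)
        moreover have "d < last ls + p" using False \<open>\<not> (ls \<noteq> [] \<and> last ls + p \<le> d)\<close> il by auto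
        ultimately show ?thesis using nfs e2 il sl pd by (simp add: nth_append)
      qed
    qed
    show ?thesis using ffs nfs e1 e2 inv by simp
  qed
qed

lemma FF_eq_NF: "valid_instance I \<Longrightarrow> slack_nonincreasing I \<Longrightarrow> NF I = FF I"
  using ff_eq_nf[of I "length I"] unfolding NF_def FF_def by (simp add: nfl_def)



lemma main_bound:
  assumes V: "valid_instance I" and S: "slack_nonincreasing I"
    and F: "feasible I \<tau>" and n0: "0 < length I"
  shows "NF I + 1 \<le> 2 * card (\<tau> ` {..<length I})"
proof -
  define n where "n = length I"
  define m where "m = NF I"
  define p where "p = (\<lambda>t. fst (I ! t))"
  define L where "L = (\<lambda>y. nfl I n ! y)"
  have n1: "n - 1 < n" "Suc (n - 1) = n" using n0 n_def by auto
  have lenm: "length (nfl I n) = m" unfolding m_def NF_def n_def by (simp add: nfl_len)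
  have m_eq: "m = Suc (nu I (n - 1))" using nu_len[of "n - 1" I] n1 lenm n_def by simp
  have nu_lt: "\<And>t. t < n \<Longrightarrow> nu I t < m"
  proof -
    fix t assume "t < n"
    then have "nu I t \<le> nu I (n - 1)" using nu_mono[of t "n - 1" I] n1 n_def by simp
    then show "nu I t < m" using m_eq by simp
  qed
  define k where "k = card (\<tau> ` {..<n})"
  define Last where "Last = {t. t < n \<and> (\<forall>t'. t < t' \<and> t' < n \<longrightarrow> \<tau> t' \<noteq> \<tau> t)}"
  define Sset where "Sset = nu I ` Last"
  define N where "N = {..<m} - Sset"
  have lastn: "n - 1 \<in> Last" unfolding Last_def using n1 by auto
  have mS: "m - 1 \<in> Sset" unfolding Sset_def using lastn m_eq by auto
  have injL: "inj_on \<tau> Last"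
  proof (rule inj_onI)
    fix x y assume xy: "x \<in> Last" "y \<in> Last" "\<tau> x = \<tau> y"
    show "x = y"
    proof (rule ccontr)
      assume "x \<noteq> y"
      then have "x < y \<or> y < x" by auto
      then show False using xy unfolding Last_def by auto
    qed
  qed
  have finL: "finite Last" unfolding Last_def by simp
  have cS: "card Sset \<le> k"
  proof -
    have "card Sset \<le> card Last" unfolding Sset_def using card_image_le finL by blast
    also have "card Last = card (\<tau> ` Last)" using card_image[OF injL] by simp
    also have "\<dots> \<le> k" unfolding k_def by (rule card_mono) (auto simp: Last_def)
    finally show ?thesis .
  qed
  have SsubM: "Sset \<subseteq> {..<m}" unfolding Sset_def Last_def using nu_lt by auto
  have cardm: "m = card Sset + card N"
  proof -
    have "card N = card {..<m} - card Sset" unfolding N_def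
      using SsubM by (simp add: card_Diff_subset finite_subset)
    moreover have "card Sset \<le> m" using card_mono[OF _ SsubM] by simp
    ultimately show ?thesis by simp
  qed
  have k1: "1 \<le> k"
  proof -
    have "\<tau> (n - 1) \<in> \<tau> ` {..<n}" using n1 by auto
    then have "\<tau> ` {..<n} \<noteq> {}" by auto
    then show ?thesis unfolding k_def by (simp add: Suc_leI card_gt_0_iff)
  qed
  show ?thesis
  proof (cases "N = {}")
    case True
    then show ?thesis using cardm cS k1 m_def n_def k_def by simp
  next
    case Nne: False
    define op where "op = (\<lambda>y. LEAST t. t < n \<and> nu I t = Suc y)"
    define a where "a = (\<lambda>y. slack I (op y))"
    have Nm: "\<And>y. y \<in> N \<Longrightarrow> Suc y < m"
    proof -
      fix y assume "y \<in> N"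
      then have "y < m" "y \<noteq> m - 1" using mS N_def by auto
      then show "Suc y < m" by linarith
    qed
    have opp: "\<And>y. y \<in> N \<Longrightarrow> op y < n \<and> nu I (op y) = Suc y \<and> 0 < op y \<and> nu I (op y - 1) = y"
    proof -
      fix y assume yN: "y \<in> N"
      have "Suc y \<le> nu I (n - 1)" using Nm[OF yN] m_eq by simp
      then obtain t where t: "t \<le> n - 1" "nu I t = Suc y" using nu_ivt[of "n - 1" I "Suc y"] n1 n_def by auto
      then have ex: "\<exists>t. t < n \<and> nu I t = Suc y" using n1 by (intro exI[of _ t]) auto
      have o1: "op y < n \<and> nu I (op y) = Suc y" unfolding op_def using LeastI_ex[OF ex] .
      have o2: "0 < op y" using o1 nu_0[of I] n0 by (metis gr0I nat.distinct(1))
      have "\<not> (op y - 1 < n \<and> nu I (op y - 1) = Suc y)"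
        unfolding op_def by (rule not_less_Least) (use o2 op_def in simp)
      then have ne: "nu I (op y - 1) \<noteq> Suc y" using o1 by (meson diff_le_self le_less_trans)
      have le: "nu I (op y - 1) \<le> Suc y" using nu_mono[of "op y - 1" "op y" I] o1 n_def by simp
      have ge: "Suc y \<le> Suc (nu I (op y - 1))" using nu_step[of "op y - 1" I] o1 o2 n_def by simp
      show "op y < n \<and> nu I (op y) = Suc y \<and> 0 < op y \<and> nu I (op y - 1) = y"
        using o1 o2 ne le ge by simp
    qed
    have K1: "\<And>y v. y \<in> N \<Longrightarrow> v < n \<Longrightarrow> y < nu I v \<Longrightarrow> op y \<le> v"
    proof (rule ccontr)
      fix y v assume yN: "y \<in> N" and v: "v < n" "y < nu I v" and c: "\<not> op y \<le> v"
      then have "v \<le> op y - 1" by simp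
      moreover have "op y - 1 < length I" using opp[OF yN] n_def by linarith
      ultimately have "nu I v \<le> nu I (op y - 1)" using nu_mono[of v "op y - 1" I] by simp
      then show False using opp[OF yN] v by simp
    qed
    have K1': "\<And>y v. y \<in> N \<Longrightarrow> v < n \<Longrightarrow> y < nu I v \<Longrightarrow> slack I v \<le> a y"
      using K1 S unfolding a_def slack_nonincreasing_def n_def by blast
    have K2: "\<And>y. y \<in> N \<Longrightarrow> a y < L y"
    proof -
      fix y assume yN: "y \<in> N"
      define t where "t = op y - 1"
      have st: "Suc t = op y" using opp[OF yN] t_def by simp
      have "snd (I ! Suc t) < nfl I (length I) ! nu I t + fst (I ! Suc t)"
        using nu_closed[of t I] opp[OF yN] st n_def t_def by simp
      moreover have "fst (I ! op y) \<le> snd (I ! op y)" using V opp[OF yN] n_def unfolding valid_instance_def by simp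
      ultimately show "a y < L y" using st opp[OF yN] unfolding a_def L_def slack_def t_def n_def by simp
    qed
    have anti: "\<forall>x\<in>N. \<forall>y\<in>N. x \<le> y \<longrightarrow> a y \<le> a x"
    proof (intro ballI impI)
      fix x y assume xy: "x \<in> N" "y \<in> N" "x \<le> y"
      have "slack I (op y) \<le> a x" using K1'[of x "op y"] opp[OF xy(2)] xy by simp
      then show "a y \<le> a x" unfolding a_def by simp
    qed
    define NJ where "NJ = (\<lambda>M. {t. t < n \<and> \<tau> t = M \<and> nu I t \<in> N})"
    define A where "A = {M. NJ M \<noteq> {}}"
    define u where "u = (\<lambda>M. Max (NJ M))"
    define i where "i = (\<lambda>M. nu I (u M))"
    have finNJ: "\<And>M. finite (NJ M)" unfolding NJ_def by simp
    have AK: "A \<subseteq> \<tau> ` {..<n}" unfolding A_def NJ_def by auto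
    have finA: "finite A" using AK finite_subset by blast
    have cA: "card A \<le> k" unfolding k_def using card_mono[OF _ AK] by simp
    have uprop: "\<And>M. M \<in> A \<Longrightarrow> u M \<in> NJ M \<and> (\<forall>t\<in>NJ M. t \<le> u M)"
      unfolding u_def A_def using finNJ by auto
    have iN: "\<forall>M\<in>A. i M \<in> N" using uprop unfolding i_def NJ_def by auto
    have vex: "\<And>M. M \<in> A \<Longrightarrow> \<exists>v. u M < v \<and> v < n \<and> \<tau> v = M \<and> i M < nu I v"
    proof -
      fix M assume MA: "M \<in> A"
      have uN: "u M < n" "\<tau> (u M) = M" "nu I (u M) \<in> N" using uprop[OF MA] unfolding NJ_def by auto
      then have "u M \<notin> Last" using N_def Sset_def by auto
      then obtain v where v: "u M < v" "v < n" "\<tau> v = M" using uN unfolding Last_def by auto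
      have "nu I (u M) \<le> nu I v" using nu_mono[of "u M" v I] v n_def by simp
      moreover have "nu I v \<noteq> nu I (u M)"
      proof
        assume "nu I v = nu I (u M)"
        then have "v \<in> NJ M" using v uN unfolding NJ_def by simp
        then show False using uprop[OF MA] v by force
      qed
      ultimately show "\<exists>v. u M < v \<and> v < n \<and> \<tau> v = M \<and> i M < nu I v" using v i_def by auto
    qed
    have perM: "\<And>M. M \<in> A \<Longrightarrow> (\<Sum>t\<in>NJ M. p t) \<le> a (i M)"
    proof -
      fix M assume MA: "M \<in> A"
      obtain v where v: "u M < v" "v < n" "\<tau> v = M" "i M < nu I v" using vex[OF MA] by blast
      have sub: "NJ M \<subseteq> {t. t < v \<and> \<tau> t = M}" using uprop[OF MA] v unfolding NJ_def by force
      have "(\<Sum>t\<in>NJ M. p t) \<le> (\<Sum>t\<in>{t. t < v \<and> \<tau> t = M}. p t)"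
        by (rule sum_mono2) (use sub in auto)
      moreover have "completion I \<tau> v = (\<Sum>t\<in>{t. t < v \<and> \<tau> t = M}. p t) + p v"
      proof -
        have "{k. k \<le> v \<and> \<tau> k = \<tau> v} = insert v {t. t < v \<and> \<tau> t = M}" using v by auto
        then show ?thesis unfolding completion_def p_def by simp
      qed
      moreover have "completion I \<tau> v \<le> snd (I ! v)" using F v n_def unfolding feasible_def by simp
      moreover have "slack I v \<le> a (i M)" using K1'[of "i M" v] iN MA v by simp
      ultimately show "(\<Sum>t\<in>NJ M. p t) \<le> a (i M)" unfolding slack_def p_def by linarith
    qed
    have cond: "\<forall>x\<in>N. (\<Sum>y\<in>{y\<in>N. x \<le> y}. a y) < (\<Sum>M\<in>{M\<in>A. x \<le> i M}. a (i M))"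
    proof
      fix x assume xN: "x \<in> N"
      define Y where "Y = {y\<in>N. x \<le> y}"
      define T where "T = {t. t < n \<and> nu I t \<in> N \<and> x \<le> nu I t}"
      have finY: "finite Y" unfolding Y_def N_def by simp
      have finT: "finite T" unfolding T_def by simp
      have "(\<Sum>y\<in>Y. a y) < (\<Sum>y\<in>Y. L y)"
        by (rule sum_strict_mono) (use finY xN K2 Y_def in auto)
      also have "(\<Sum>y\<in>Y. L y) = (\<Sum>y\<in>Y. \<Sum>t\<in>{t\<in>T. nu I t = y}. p t)"
      proof (rule sum.cong)
        fix y assume yY: "y \<in> Y"
        then have "y < m" using N_def Y_def by auto
        then have "L y = (\<Sum>t\<in>{t. t < n \<and> nu I t = y}. p t)"
          unfolding L_def p_def using nfl_loads[of n I y] lenm n_def by simp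
        also have "{t. t < n \<and> nu I t = y} = {t\<in>T. nu I t = y}" using yY unfolding T_def Y_def by auto
        finally show "L y = (\<Sum>t\<in>{t\<in>T. nu I t = y}. p t)" .
      qed simp
      also have "\<dots> = (\<Sum>t\<in>T. p t)"
        by (rule sum.group) (use finT finY in \<open>auto simp: T_def Y_def\<close>)
      also have "\<dots> = (\<Sum>M\<in>A. \<Sum>t\<in>{t\<in>T. \<tau> t = M}. p t)"
        by (rule sum.group[symmetric]) (use finT finA in \<open>auto simp: T_def A_def NJ_def\<close>)
      also have "\<dots> \<le> (\<Sum>M\<in>A. if x \<le> i M then a (i M) else 0)"
      proof (rule sum_mono)
        fix M assume MA: "M \<in> A"
        show "(\<Sum>t\<in>{t\<in>T. \<tau> t = M}. p t) \<le> (if x \<le> i M then a (i M) else 0)"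
        proof (cases "x \<le> i M")
          case True
          have "(\<Sum>t\<in>{t\<in>T. \<tau> t = M}. p t) \<le> (\<Sum>t\<in>NJ M. p t)"
            by (rule sum_mono2) (use finNJ in \<open>auto simp: T_def NJ_def\<close>)
          then show ?thesis using perM[OF MA] True by simp
        next
          case False
          have "{t\<in>T. \<tau> t = M} = {}"
          proof (rule ccontr)
            assume "{t\<in>T. \<tau> t = M} \<noteq> {}"
            then obtain t where t: "t \<in> T" "\<tau> t = M" by auto
            then have "t \<in> NJ M" unfolding T_def NJ_def by simp
            then have "t \<le> u M" using uprop[OF MA] by simp
            then have "nu I t \<le> i M" unfolding i_def using nu_mono[of t "u M" I] uprop[OF MA] n_def NJ_def by auto
            then show False using t False T_def by auto
          qed
          then have "(\<Sum>t\<in>{t\<in>T. \<tau> t = M}. p t) = 0" by (metis sum.empty)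
          then show ?thesis using False by simp
        qed
      qed
      also have "\<dots> = (\<Sum>M\<in>{M\<in>A. x \<le> i M}. a (i M))"
        using sum.inter_filter[OF finA, of "\<lambda>M. a (i M)" "\<lambda>M. x \<le> i M"] by simp
      finally show "(\<Sum>y\<in>{y\<in>N. x \<le> y}. a y) < (\<Sum>M\<in>{M\<in>A. x \<le> i M}. a (i M))"
        unfolding Y_def .
    qed
    have "card N < card A"
      by (rule abstract_count[OF _ Nne finA iN anti cond]) (simp add: N_def)
    then have "m + 1 \<le> 2 * k" using cardm cS cA by linarith
    then show ?thesis using m_def n_def k_def by simp
  qed
qed



lemma feasible_id: "valid_instance I \<Longrightarrow> feasible I Suc"
proof -
  assume v: "valid_instance I"
  have "\<And>j. {k. k \<le> j \<and> Suc k = Suc j} = {j}" by auto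
  then show ?thesis using v unfolding feasible_def completion_def valid_instance_def by auto
qed

lemma opt_witness: "valid_instance I \<Longrightarrow> \<exists>\<tau>. feasible I \<tau> \<and> card (\<tau> ` {..<length I}) = OPT I"
proof -
  assume v: "valid_instance I"
  have ex: "\<exists>m. \<exists>\<tau>. feasible I \<tau> \<and> card (\<tau> ` {..<length I}) = m" using feasible_id[OF v] by blast
  show ?thesis unfolding OPT_def using LeastI_ex[OF ex] .
qed

lemma opt_le: "feasible I \<tau> \<Longrightarrow> OPT I \<le> card (\<tau> ` {..<length I})"
  unfolding OPT_def by (rule Least_le) blast

lemma opt_pos: "valid_instance I \<Longrightarrow> 0 < length I \<Longrightarrow> 0 < OPT I"
proof -
  assume v: "valid_instance I" and n: "0 < length I"
  obtain \<tau> where t: "feasible I \<tau>" "card (\<tau> ` {..<length I}) = OPT I" using opt_witness[OF v] by blast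
  have "\<tau> 0 \<in> \<tau> ` {..<length I}" using n by auto
  then have "\<tau> ` {..<length I} \<noteq> {}" by blast
  then show ?thesis using t card_gt_0_iff by (metis finite_imageI finite_lessThan)
qed

lemma opt_0: "valid_instance I \<Longrightarrow> length I = 0 \<Longrightarrow> OPT I = 0"
  using opt_witness[of I] by auto

lemma nf_pos: "0 < length I \<Longrightarrow> 0 < NF I"
  using nfl_ne[of "length I - 1" I] unfolding NF_def by (simp add: nfl_len[symmetric])

lemma part1:
  assumes V: "valid_instance I" and S: "slack_nonincreasing I"
  shows "NF I = FF I \<and> (OPT I \<ge> 2 \<longrightarrow> FF I < 2 * OPT I) \<and> (OPT I = 1 \<longrightarrow> FF I = 1)"
proof (cases "length I = 0")
  case True
  then show ?thesis using opt_0[of I] V FF_eq_NF[OF V S] by simp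
next
  case False
  obtain \<tau> where t: "feasible I \<tau>" "card (\<tau> ` {..<length I}) = OPT I" using opt_witness[OF V] by blast
  have b: "NF I + 1 \<le> 2 * OPT I" using main_bound[OF V S t(1)] False t(2) by simp
  have e: "NF I = FF I" using FF_eq_NF[OF V S] .
  have "0 < NF I" using nf_pos False by simp
  then show ?thesis using b e by auto
qed



lemma concat_pairs: "concat (map (\<lambda>_. [x, y]) [0..<r]) = map (\<lambda>t. if even t then x else y) [0..<2*r]"
  by (induction r) auto

lemma tight_len: "length (tight_instance k) = 3 * k + 1"
  unfolding tight_instance_def concat_pairs by simp

lemma tight_nth: "t < 3 * k + 1 \<Longrightarrow> tight_instance k ! t =
   (if t < 2 * k then (if even t then (k, 2*k) else (1, k+1)) else (k+1, 2*k+1))"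
proof -
  assume t: "t < 3 * k + 1"
  have r: "replicate (k+1) (k+1, 2*k+1) ! (t - 2*k) = (k+1, 2*k+1)" if "\<not> t < 2*k"
    using t that by (intro nth_replicate) simp
  show ?thesis unfolding tight_instance_def concat_pairs using r by (auto simp: nth_append simp del: replicate.simps)
qed

lemma tight_slack: "t < length (tight_instance k) \<Longrightarrow> slack (tight_instance k) t = k"
  using tight_nth[of t k] tight_len[of k] unfolding slack_def by auto

lemma tight_valid: "1 \<le> k \<Longrightarrow> valid_instance (tight_instance k)"
  using tight_nth[of _ k] tight_len[of k] unfolding valid_instance_def by auto

lemma tight_sn: "slack_nonincreasing (tight_instance k)"
  using tight_slack[of _ k] unfolding slack_nonincreasing_def by auto

lemma nf_pairs: "1 \<le> k \<Longrightarrow>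
  foldl nf_step [] (concat (map (\<lambda>_. [(k, 2*k), (1, k+1)]) [0..<r])) = replicate r (k+1)"
proof (induction r)
  case 0 then show ?case by simp
next
  case (Suc r)
  have "foldl nf_step [] (concat (map (\<lambda>_. [(k, 2*k), (1, k+1)]) [0..<Suc r]))
     = nf_step (nf_step (replicate r (k+1)) (k, 2*k)) (1, k+1)" using Suc by simp
  also have "nf_step (replicate r (k+1)) (k, 2*k) = replicate r (k+1) @ [k]"
    using Suc.prems by (cases r) (auto simp: nf_step_def Let_def)
  also have "nf_step (replicate r (k+1) @ [k]) (1, k+1) = replicate (Suc r) (k+1)"
    by (simp add: nf_step_def Let_def replicate_append_same)
  finally show ?case .
qed

lemma nf_cs: "1 \<le> r \<Longrightarrow>
  foldl nf_step (replicate r (k+1)) (replicate j (k+1, 2*k+1)) = replicate (r + j) (k+1)"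
proof (induction j arbitrary: r)
  case 0 then show ?case by simp
next
  case (Suc j)
  have "nf_step (replicate r (k+1)) (k+1, 2*k+1) = replicate (Suc r) (k+1)"
    using Suc.prems by (cases r) (auto simp: nf_step_def Let_def replicate_append_same)
  then show ?case using Suc.IH[of "Suc r"] by simp
qed

lemma tight_NF: "1 \<le> k \<Longrightarrow> NF (tight_instance k) = 2 * k + 1"
  unfolding NF_def tight_instance_def using nf_pairs[of k k] nf_cs[of k k "k+1"] by simp

definition tau_t :: "nat \<Rightarrow> nat \<Rightarrow> nat" where
  "tau_t k t = (if t < 2*k then (if even t then t div 2 + 1 else k+1)
     else (if t < 3*k then t - 2*k + 1 else k+1))"

lemma odd_card: "card {t. t < 2*k \<and> odd t} = k"
proof -
  have "{t. t < 2*k \<and> odd t} = (\<lambda>i. 2*i+1) ` {..<k}"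
  proof
    show "{t. t < 2*k \<and> odd t} \<subseteq> (\<lambda>i. 2*i+1) ` {..<k}"
    proof
      fix t assume "t \<in> {t. t < 2*k \<and> odd t}"
      then have "t = 2*(t div 2)+1" "t div 2 < k" by auto
      then show "t \<in> (\<lambda>i. 2*i+1) ` {..<k}" by blast
    qed
  qed auto
  moreover have "inj_on (\<lambda>i. 2*i+1) {..<k}" by (auto intro: inj_onI)
  ultimately show ?thesis by (simp add: card_image)
qed

lemma tight_feasible:
  assumes k: "1 \<le> k"
  shows "feasible (tight_instance k) (tau_t k)"
  unfolding feasible_def
proof (intro allI impI conjI)
  define I where "I = tight_instance k"
  fix j assume j: "j < length (tight_instance k)"
  then have j3: "j < 3*k+1" using tight_len by simp
  show "tau_t k j \<in> {1..length (tight_instance k)}" using j3 tight_len[of k] unfolding tau_t_def by auto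
  define Sj where "Sj = {t. t \<le> j \<and> tau_t k t = tau_t k j}"
  have pI: "\<And>t. t \<le> j \<Longrightarrow> fst (tight_instance k ! t) =
      (if t < 2 * k then (if even t then k else 1) else k+1)"
    using tight_nth[of _ k] j3 by auto
  have fin: "finite Sj" unfolding Sj_def by simp
  have comp: "completion (tight_instance k) (tau_t k) j = (\<Sum>t\<in>Sj. fst (tight_instance k ! t))"
    unfolding completion_def Sj_def by simp
  show "completion (tight_instance k) (tau_t k) j \<le> snd (tight_instance k ! j)"
  proof (cases "j < 2*k")
    case jl: True
    show ?thesis
    proof (cases "even j")
      case True
      have "Sj = {j}"
      proof -
        have "\<And>t. t \<le> j \<Longrightarrow> tau_t k t = tau_t k j \<Longrightarrow> t = j"
        proof -
          fix t assume t: "t \<le> j" "tau_t k t = tau_t k j"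
          have tj: "tau_t k j = j div 2 + 1" using jl True unfolding tau_t_def by simp
          show "t = j"
          proof (cases "even t")
            case True then show ?thesis using t tj jl unfolding tau_t_def
              by (simp split: if_splits) (metis True \<open>even j\<close> dvd_mult_div_cancel)
          next
            case False then show ?thesis using t tj jl unfolding tau_t_def by (auto split: if_splits)
          qed
        qed
        then show ?thesis unfolding Sj_def by auto
      qed
      then show ?thesis using comp pI[of j] tight_nth[of j k] j3 jl True by simp
    next
      case False
      have sub: "Sj \<subseteq> {t. t < 2*k \<and> odd t}"
      proof
        fix t assume "t \<in> Sj"
        then have t: "t \<le> j" "tau_t k t = k + 1" using jl False unfolding Sj_def tau_t_def by auto
        show "t \<in> {t. t < 2*k \<and> odd t}"
          using t jl unfolding tau_t_def by (auto split: if_splits)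
      qed
      have "(\<Sum>t\<in>Sj. fst (tight_instance k ! t)) = (\<Sum>t\<in>Sj. 1)"
        by (rule sum.cong) (use sub pI Sj_def in auto)
      also have "\<dots> = card Sj" by simp
      also have "\<dots> \<le> k" using card_mono[OF _ sub] odd_card[of k] by simp
      finally show ?thesis using comp tight_nth[of j k] j3 jl False by simp
    qed
  next
    case jg: False
    show ?thesis
    proof (cases "j < 3*k")
      case True
      define i where "i = j - 2*k"
      have sub: "Sj \<subseteq> {2*i, j}"
      proof
        fix t assume "t \<in> Sj"
        then have t: "t \<le> j" "tau_t k t = i + 1" using jg True unfolding Sj_def tau_t_def i_def by auto
        show "t \<in> {2*i, j}"
          using t jg True k unfolding tau_t_def i_def by (auto split: if_splits)
      qed
      have "(\<Sum>t\<in>Sj. fst (tight_instance k ! t)) \<le> (\<Sum>t\<in>{2*i, j}. fst (tight_instance k ! t))"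
        by (rule sum_mono2) (use sub in auto)
      also have "\<dots> = k + (k+1)"
        using pI[of "2*i"] pI[of j] jg True i_def by simp
      finally show ?thesis using comp tight_nth[of j k] j3 jg by simp
    next
      case False
      then have jeq: "j = 3*k" using j3 by simp
      have sub: "Sj \<subseteq> insert j {t. t < 2*k \<and> odd t}"
      proof
        fix t assume "t \<in> Sj"
        then have t: "t \<le> j" "tau_t k t = k + 1" using jeq unfolding Sj_def tau_t_def by auto
        show "t \<in> insert j {t. t < 2*k \<and> odd t}"
          using t jeq unfolding tau_t_def by (auto split: if_splits)
      qed
      have "(\<Sum>t\<in>Sj. fst (tight_instance k ! t)) \<le> (\<Sum>t\<in>insert j {t. t < 2*k \<and> odd t}. fst (tight_instance k ! t))"
        by (rule sum_mono2) (use sub in auto)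
      also have "\<dots> = (k+1) + (\<Sum>t\<in>{t. t < 2*k \<and> odd t}. fst (tight_instance k ! t))"
        using pI[of j] jeq k by simp
      also have "(\<Sum>t\<in>{t. t < 2*k \<and> odd t}. fst (tight_instance k ! t)) = (\<Sum>t\<in>{t. t < 2*k \<and> odd t}. 1)"
        by (rule sum.cong) (use pI jeq in auto)
      also have "\<dots> = k" using odd_card by simp
      finally show ?thesis using comp tight_nth[of j k] j3 jeq by simp
    qed
  qed
qed

lemma tight_opt_le: "1 \<le> k \<Longrightarrow> OPT (tight_instance k) \<le> k + 1"
proof -
  assume k: "1 \<le> k"
  have "OPT (tight_instance k) \<le> card (tau_t k ` {..<length (tight_instance k)})"
    using opt_le tight_feasible[OF k] by blast
  also have "\<dots> \<le> card {1..k+1}"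
    by (rule card_mono) (auto simp: tau_t_def tight_len)
  finally show ?thesis by simp
qed



lemma tight_opt: "1 \<le> k \<Longrightarrow> OPT (tight_instance k) = k + 1"
proof -
  assume k: "1 \<le> k"
  define I where "I = tight_instance k"
  have V: "valid_instance I" and S: "slack_nonincreasing I" using tight_valid[OF k] tight_sn I_def by auto
  have FF: "FF I = 2*k+1" using tight_NF[OF k] FF_eq_NF[OF V S] I_def by simp
  have p1: "OPT I \<ge> 2 \<longrightarrow> FF I < 2 * OPT I" "OPT I = 1 \<longrightarrow> FF I = 1" using part1[OF V S] by auto
  have pos: "0 < OPT I" using opt_pos[OF V] tight_len[of k] I_def by simp
  have "k + 1 \<le> OPT I"
  proof (cases "OPT I = 1")
    case True then show ?thesis using p1 FF k by simp
  next
    case False then show ?thesis using p1 FF pos by simp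
  qed
  then show ?thesis using tight_opt_le[OF k] I_def by simp
qed

lemma ratio_le: "valid_instance I \<Longrightarrow> slack_nonincreasing I \<Longrightarrow> real (FF I) / real (OPT I) \<le> 2"
proof -
  assume V: "valid_instance I" and S: "slack_nonincreasing I"
  have p1: "OPT I \<ge> 2 \<longrightarrow> FF I < 2 * OPT I" "OPT I = 1 \<longrightarrow> FF I = 1" using part1[OF V S] by auto
  consider "OPT I = 0" | "OPT I = 1" | "OPT I \<ge> 2" by linarith
  then show ?thesis
  proof cases
    case 1 then show ?thesis by simp
  next
    case 2 then show ?thesis using p1 by simp
  next
    case 3
    then have "real (FF I) \<le> 2 * real (OPT I)" using p1 by linarith
    then show ?thesis using 3 by (simp add: divide_le_eq)
  qed
qed

lemma sup_part: "Sup {real (FF I) / real (OPT I) :: real | I. valid_instance I \<and> slack_nonincreasing I} = 2"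
proof (rule cSup_eq_non_empty)
  have "valid_instance (tight_instance 1) \<and> slack_nonincreasing (tight_instance 1)"
    using tight_valid tight_sn by auto
  then show "{real (FF I) / real (OPT I) :: real | I. valid_instance I \<and> slack_nonincreasing I} \<noteq> {}" by blast
next
  fix x assume "x \<in> {real (FF I) / real (OPT I) :: real | I. valid_instance I \<and> slack_nonincreasing I}"
  then show "x \<le> 2" using ratio_le by auto
next
  fix y assume ub: "\<And>x. x \<in> {real (FF I) / real (OPT I) :: real | I. valid_instance I \<and> slack_nonincreasing I} \<Longrightarrow> x \<le> y"
  have tk: "real (2*k+1) / real (k+1) \<le> y" if k: "1 \<le> k" for k
  proof -
    have V: "valid_instance (tight_instance k)" and S: "slack_nonincreasing (tight_instance k)"
      using tight_valid[OF k] tight_sn by auto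
    have "FF (tight_instance k) = 2*k+1" using tight_NF[OF k] FF_eq_NF[OF V S] by simp
    moreover have "OPT (tight_instance k) = k+1" using tight_opt[OF k] .
    ultimately show ?thesis using ub V S by (metis (mono_tags, lifting) mem_Collect_eq)
  qed
  show "2 \<le> y"
  proof (rule ccontr)
    assume "\<not> 2 \<le> y"
    then have "0 < 2 - y" by simp
    then obtain n where n: "inverse (real (Suc n)) < 2 - y" using reals_Archimedean by blast
    define k where "k = Suc n"
    have e: "real (2*k+1) / real (k+1) = 2 - inverse (real (k+1))"
      by (simp add: field_simps)
    have le: "inverse (real (k+1)) \<le> inverse (real (Suc n))"
      unfolding k_def by (rule le_imp_inverse_le) auto
    from e le have "y < real (2*k+1) / real (k+1)" using n by linarith
    then show False using tk[of k] k_def by simp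
  qed
qed

theorem mainTheorem5:
  shows "(\<forall>I. valid_instance I \<and> slack_nonincreasing I \<longrightarrow>
            NF I = FF I \<and>
            (OPT I \<ge> 2 \<longrightarrow> FF I < 2 * OPT I) \<and>
            (OPT I = 1 \<longrightarrow> FF I = 1))
      \<and> (\<forall>k::nat. k \<ge> 1 \<longrightarrow>
            valid_instance (tight_instance k) \<and> slack_nonincreasing (tight_instance k) \<and>
            length (tight_instance k) = 3*k+1 \<and>
            (\<forall>j < length (tight_instance k). slack (tight_instance k) j = k) \<and>
            OPT (tight_instance k) = k+1 \<and> FF (tight_instance k) = 2*k+1)
      \<and> Sup {real (FF I) / real (OPT I) :: real | I. valid_instance I \<and> slack_nonincreasing I} = 2"
proof (intro conjI allI impI)
  fix I assume "valid_instance I \<and> slack_nonincreasing I"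
  then show "NF I = FF I" "OPT I \<ge> 2 \<Longrightarrow> FF I < 2 * OPT I" "OPT I = 1 \<Longrightarrow> FF I = 1"
    using part1 by auto
next
  fix k :: nat assume k: "k \<ge> 1"
  show "valid_instance (tight_instance k)" using tight_valid[OF k] .
  show "slack_nonincreasing (tight_instance k)" using tight_sn .
  show "length (tight_instance k) = 3*k+1" using tight_len .
  show "\<And>j. j < length (tight_instance k) \<Longrightarrow> slack (tight_instance k) j = k" using tight_slack .
  show "OPT (tight_instance k) = k+1" using tight_opt[OF k] .
  show "FF (tight_instance k) = 2*k+1"
    using tight_NF[OF k] FF_eq_NF[OF tight_valid[OF k] tight_sn] by simp
next
  show "Sup {real (FF I) / real (OPT I) :: real | I. valid_instance I \<and> slack_nonincreasing I} = 2"
    using sup_part .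
qed


end
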